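(* Let $n\ge2$, $\kappa>0$, and let $\tilde\theta:\mathbb R\to[0,\infty)$ be locally Lipschitz and nondecreasing with $\tilde\theta(s)=0$ for $s\le 0$ and $\tilde\theta(s)>0$ for $s>0$; set $\theta(a,b)=\tilde\theta(\min(a,b))$. Let $1\le m<n$ and let $\rho:[0,\infty)\to\mathbb R^n$ be the solution of $$\frac{d\rho_j}{dt}=\kappa\sum_{k=1}^n\theta(\rho_j,\rho_k)(\rho_j-\rho_k),\qquad j=1,\dots,n,$$ with $\rho(0)\in\mathcal P$ satisfying $\rho_1(0)=\dots=\rho_m(0)>\rho_{m+1}(0)\ge\dots\ge\rho_n(0)$. Then $\rho_1(t)=\rho_2(t)=\dots=\rho_m(t)$ for all $t\ge0$, and $$\rho_1(t)-\max_{m<j\le n}\rho_j(t)\ \ge\ \rho_1(0)-\max_{m<j\le n}\rho_j(0)\qquad\forall t\ge0.$$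
   Context: $\mathcal P=\{\rho\in\mathbb R^n:\rho_i\ge0\ \forall i,\ \sum_{i=1}^n\rho_i=1\}$ denotes the probability simplex. *)

theory Defs
  imports "HOL-Analysis.Analysis"
begin

end

theory Submission
  imports Defs
begin

lemma g_lip:
  fixes \<theta> :: "real \<Rightarrow> real"
  assumes lip: "L-lipschitz_on (cball 0 R) \<theta>" and nn: "\<forall>s. \<theta> s \<ge> 0" and mo: "mono \<theta>"
    and x: "\<bar>x\<bar> \<le> R" and x': "\<bar>x'\<bar> \<le> R" and y: "\<bar>y\<bar> \<le> R"
  shows "\<bar>\<theta> (min x y) * (x - y) - \<theta> (min x' y) * (x' - y)\<bar> \<le> (2*R*L + \<theta> R) * \<bar>x - x'\<bar>"
proof -
  have L0: "L \<ge> 0" using lip lipschitz_on_nonneg by blast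
  have m1: "\<bar>min x y - min x' y\<bar> \<le> \<bar>x - x'\<bar>" by (auto simp: min_def)
  have mem: "min x y \<in> cball 0 R" "min x' y \<in> cball 0 R" using x x' y by (auto simp: dist_real_def min_def)
  have "\<bar>\<theta> (min x y) - \<theta> (min x' y)\<bar> \<le> L * \<bar>min x y - min x' y\<bar>"
    using lipschitz_onD[OF lip mem] by (simp add: dist_real_def)
  also have "\<dots> \<le> L * \<bar>x - x'\<bar>" using m1 L0 by (rule mult_left_mono)
  finally have A: "\<bar>\<theta> (min x y) - \<theta> (min x' y)\<bar> \<le> L * \<bar>x - x'\<bar>" .
  have B: "\<bar>x - y\<bar> \<le> 2*R" using x y by auto
  have KK: "\<theta> (min x' y) \<le> \<theta> R" using mo x' by (auto simp: mono_def min_def)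
  have C0: "\<theta> (min x' y) \<ge> 0" using nn by auto
  have eq: "\<theta> (min x y) * (x - y) - \<theta> (min x' y) * (x' - y)
      = (\<theta> (min x y) - \<theta> (min x' y)) * (x - y) + \<theta> (min x' y) * (x - x')"
    by (simp add: algebra_simps)
  have "\<bar>\<theta> (min x y) * (x - y) - \<theta> (min x' y) * (x' - y)\<bar>
     \<le> \<bar>\<theta> (min x y) - \<theta> (min x' y)\<bar> * \<bar>x - y\<bar> + \<theta> (min x' y) * \<bar>x - x'\<bar>"
    unfolding eq using C0 by (metis abs_mult abs_of_nonneg abs_triangle_ineq)
  also have "\<dots> \<le> (L * \<bar>x - x'\<bar>) * (2*R) + \<theta> R * \<bar>x - x'\<bar>"
    using A B KK L0 nn by (intro add_mono mult_mono mult_right_mono) auto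
  also have "\<dots> = (2*R*L + \<theta> R) * \<bar>x - x'\<bar>" by (simp add: algebra_simps)
  finally show ?thesis .
qed

lemma gronwall0:
  fixes d d' :: "real \<Rightarrow> real"
  assumes der: "\<And>t. 0 \<le> t \<Longrightarrow> t \<le> t0 \<Longrightarrow> (d has_real_derivative d' t) (at t within {0..})"
    and bnd: "\<And>t. 0 \<le> t \<Longrightarrow> t \<le> t0 \<Longrightarrow> \<bar>d' t\<bar> \<le> KK * \<bar>d t\<bar>"
    and d0: "d 0 = 0" and t: "0 \<le> t" "t \<le> t0"
  shows "d t = 0"
proof -
  define e where "e s = (d s)^2 * exp (-(2*KK)* s)" for s
  have contd: "continuous_on {0..t} d"
    unfolding continuous_on_eq_continuous_within
  proof
    fix x assume x: "x \<in> {0..t}"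
    hence "0 \<le> x" "x \<le> t0" using t by auto
    hence "(d has_real_derivative d' x) (at x within {0..})" by (rule der)
    hence "continuous (at x within {0..}) d" by (rule DERIV_continuous)
    thus "continuous (at x within {0..t}) d" by (rule continuous_within_subset) auto
  qed
  have ce: "continuous_on {0..t} (\<lambda>s. exp (-(2*KK) * s))" by (intro continuous_intros)
  have conte: "continuous_on {0..t} e" unfolding e_def
    by (rule continuous_on_mult[OF continuous_on_power[OF contd] ce])
  have "e t \<le> e 0"
  proof (rule DERIV_nonpos_imp_decreasing_open[OF t(1) _ conte])
    fix x assume x: "0 < x" "x < t"
    have dx: "(d has_real_derivative d' x) (at x)"
    proof -
      have dxw: "(d has_real_derivative d' x) (at x within {0..})" using x t by (intro der) auto
      have i: "x \<in> interior {0..}" using x(1) by simp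
      show ?thesis using dxw unfolding at_within_interior[OF i] .
    qed
    have "(e has_real_derivative (2 * d x * d' x * exp (-(2*KK)*x) + (d x)^2 * (exp (-(2*KK)*x) * (-(2*KK))))) (at x)"
    proof -
      have h1: "((\<lambda>s. (d s)^2) has_real_derivative (2 * d x * d' x)) (at x)"
        using DERIV_power[OF dx, of 2] by (simp add: ac_simps)
      have h2: "((\<lambda>s. exp (-(2*KK) * s)) has_real_derivative (exp (-(2*KK)*x) * (-(2*KK)))) (at x)"
        by (auto intro!: derivative_eq_intros)
      show ?thesis unfolding e_def using DERIV_mult[OF h1 h2] by (simp add: ac_simps)
    qed
    moreover have "2 * d x * d' x * exp (-(2*KK)*x) + (d x)^2 * (exp (-(2*KK)*x) * (-(2*KK))) \<le> 0"
    proof -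
      have "d x * d' x \<le> \<bar>d x\<bar> * \<bar>d' x\<bar>" by (metis abs_ge_self abs_mult)
      also have "\<dots> \<le> \<bar>d x\<bar> * (KK * \<bar>d x\<bar>)" using bnd[of x] x t by (intro mult_left_mono) auto
      also have "\<dots> = KK * (d x)^2" by (simp add: power2_eq_square)
      finally have "2 * d x * d' x - 2*KK*(d x)^2 \<le> 0" by simp
      hence "exp (-(2*KK)*x) * (2 * d x * d' x - 2*KK*(d x)^2) \<le> 0"
        by (simp add: mult_nonneg_nonpos)
      thus ?thesis by (simp add: algebra_simps)
    qed
    ultimately show "\<exists>y. (e has_real_derivative y) (at x) \<and> y \<le> 0" by blast
  qed
  also have "e 0 = 0" by (simp add: e_def d0)
  finally have "(d t)^2 * exp (-(2*KK)*t) \<le> 0" by (simp add: e_def)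
  hence "(d t)^2 \<le> 0" by (simp add: mult_le_0_iff)
  thus ?thesis by simp
qed

lemma term_ineq:
  fixes \<theta> :: "real \<Rightarrow> real"
  assumes nn: "\<forall>s. \<theta> s \<ge> 0" and ba: "b \<le> a" and c: "c = a \<or> c \<le> b"
  shows "\<theta> (min b c) * (b - c) \<le> \<theta> (min a c) * (a - c)"
  using c
proof
  assume "c = a"
  thus ?thesis using nn ba by (simp add: mult_nonneg_nonpos)
next
  assume cb: "c \<le> b"
  hence "min b c = c" "min a c = c" using ba by auto
  thus ?thesis using nn ba cb by (simp add: mult_left_mono)
qed

theorem mainTheorem3:
  fixes n m :: nat and \<kappa> :: real
    and \<theta>t :: "real \<Rightarrow> real"
    and \<rho> :: "real \<Rightarrow> nat \<Rightarrow> real"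
  assumes n2: "n \<ge> 2"
    and kpos: "\<kappa> > 0"
    and loclip: "\<forall>x. \<exists>\<delta>>0. \<exists>L. L-lipschitz_on (cball x \<delta>) \<theta>t"
    and nonneg: "\<forall>s. \<theta>t s \<ge> 0"
    and mono: "mono \<theta>t"
    and zero: "\<forall>s\<le>0. \<theta>t s = 0"
    and pos: "\<forall>s>0. \<theta>t s > 0"
    and m: "1 \<le> m" "m < n"
    and ode: "\<forall>j\<in>{1..n}. \<forall>t\<ge>0.
       ((\<lambda>s. \<rho> s j) has_real_derivative
          \<kappa> * (\<Sum>k=1..n. \<theta>t (min (\<rho> t j) (\<rho> t k)) * (\<rho> t j - \<rho> t k)))
       (at t within {0..})"
    and simplex: "(\<forall>j\<in>{1..n}. \<rho> 0 j \<ge> 0) \<and> (\<Sum>j=1..n. \<rho> 0 j) = 1"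
    and init_eq: "\<forall>j\<in>{1..m}. \<rho> 0 j = \<rho> 0 1"
    and init_gap: "\<rho> 0 1 > \<rho> 0 (m+1)"
    and init_ord: "\<forall>j. m < j \<and> j < n \<longrightarrow> \<rho> 0 j \<ge> \<rho> 0 (j+1)"
  shows "\<forall>t\<ge>0. (\<forall>j\<in>{1..m}. \<rho> t j = \<rho> t 1) \<and>
     \<rho> t 1 - Max ((\<lambda>j. \<rho> t j) ` {m<..n}) \<ge> \<rho> 0 1 - Max ((\<lambda>j. \<rho> 0 j) ` {m<..n})"
proof -
  have cont: "continuous_on {0..t0} (\<lambda>s. \<rho> s j)" if j: "j \<in> {1..n}" for j t0
    unfolding continuous_on_eq_continuous_within
  proof
    fix x assume "x \<in> {0..t0}"
    hence x0: "0 \<le> x" by simp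
    have "\<exists>D. ((\<lambda>s. \<rho> s j) has_real_derivative D) (at x within {0..})"
      using ode j x0 by blast
    then obtain D where "((\<lambda>s. \<rho> s j) has_real_derivative D) (at x within {0..})" by blast
    hence "continuous (at x within {0..}) (\<lambda>s. \<rho> s j)" by (rule DERIV_continuous)
    thus "continuous (at x within {0..t0}) (\<lambda>s. \<rho> s j)" by (rule continuous_within_subset) auto
  qed
  have eqpart: "\<rho> t0 i = \<rho> t0 1" if t0: "0 \<le> t0" and i: "i \<in> {1..m}" for t0 i
  proof -
    define F where "F s = (\<Sum>j=1..n. \<bar>\<rho> s j\<bar>)" for s
    have "continuous_on {0..t0} F" unfolding F_def
      by (rule continuous_on_sum, rule continuous_on_rabs, rule cont) auto
    hence "compact (F ` {0..t0})" by (rule compact_continuous_image) simp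
    then obtain R where R: "\<forall>y\<in>F`{0..t0}. norm y \<le> R" using compact_imp_bounded bounded_iff by metis
    have Rb: "\<bar>\<rho> s j\<bar> \<le> R" if s: "s \<in> {0..t0}" and j: "j \<in> {1..n}" for s j
    proof -
      have "\<bar>\<rho> s j\<bar> \<le> F s" unfolding F_def by (rule member_le_sum) (use j in auto)
      also have "F s \<le> R"
      proof -
        have "norm (F s) \<le> R" using R s by blast
        thus ?thesis by simp
      qed
      finally show ?thesis .
    qed
    have ll: "local_lipschitz {0::real} (cball 0 R) (\<lambda>_. \<theta>t)"
      unfolding local_lipschitz_def
    proof (intro ballI)
      fix x t :: real assume "x \<in> cball 0 R" "t \<in> {0::real}"
      obtain \<delta> L where "\<delta> > 0" "L-lipschitz_on (cball x \<delta>) \<theta>t" using loclip by blast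
      thus "\<exists>u>0. \<exists>L. \<forall>t\<in>cball t u \<inter> {0}. L-lipschitz_on (cball x u \<inter> cball 0 R) \<theta>t"
        by (meson Int_lower1 lipschitz_on_subset)
    qed
    obtain L where L: "L-lipschitz_on (cball 0 R) \<theta>t"
      using local_lipschitz_compact_implies_lipschitz[OF ll] by auto
    define KK where "KK = \<kappa> * (real n * (2*R*L + \<theta>t R))"
    define d where "d s = \<rho> s i - \<rho> s 1" for s
    define d' where "d' s = \<kappa> * (\<Sum>k=1..n. \<theta>t (min (\<rho> s i) (\<rho> s k)) * (\<rho> s i - \<rho> s k))
        - \<kappa> * (\<Sum>k=1..n. \<theta>t (min (\<rho> s 1) (\<rho> s k)) * (\<rho> s 1 - \<rho> s k))" for s
    have in1: "i \<in> {1..n}" "1 \<in> {1..n}" using i m by auto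
    have "d t0 = 0"
    proof (rule gronwall0[where d'=d' and KK=KK and t0=t0])
      show "(d has_real_derivative d' t) (at t within {0..})" if "0 \<le> t" "t \<le> t0" for t
      proof -
        have a: "((\<lambda>s. \<rho> s i) has_real_derivative \<kappa> * (\<Sum>k=1..n. \<theta>t (min (\<rho> t i) (\<rho> t k)) * (\<rho> t i - \<rho> t k))) (at t within {0..})"
          using ode in1 that by blast
        have b: "((\<lambda>s. \<rho> s 1) has_real_derivative \<kappa> * (\<Sum>k=1..n. \<theta>t (min (\<rho> t 1) (\<rho> t k)) * (\<rho> t 1 - \<rho> t k))) (at t within {0..})"
          using ode in1 that by blast
        show ?thesis unfolding d_def d'_def by (rule DERIV_diff[OF a b])
      qed
      show "\<bar>d' t\<bar> \<le> KK * \<bar>d t\<bar>" if t: "0 \<le> t" "t \<le> t0" for t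
      proof -
        have "d' t = \<kappa> * (\<Sum>k=1..n. \<theta>t (min (\<rho> t i) (\<rho> t k)) * (\<rho> t i - \<rho> t k)
                  - \<theta>t (min (\<rho> t 1) (\<rho> t k)) * (\<rho> t 1 - \<rho> t k))"
          unfolding d'_def by (simp add: sum_subtractf right_diff_distrib)
        hence "\<bar>d' t\<bar> = \<kappa> * \<bar>\<Sum>k=1..n. \<theta>t (min (\<rho> t i) (\<rho> t k)) * (\<rho> t i - \<rho> t k)
                  - \<theta>t (min (\<rho> t 1) (\<rho> t k)) * (\<rho> t 1 - \<rho> t k)\<bar>" using kpos by (simp add: abs_mult)
        also have "\<dots> \<le> \<kappa> * (\<Sum>k=1..n. \<bar>\<theta>t (min (\<rho> t i) (\<rho> t k)) * (\<rho> t i - \<rho> t k)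
                  - \<theta>t (min (\<rho> t 1) (\<rho> t k)) * (\<rho> t 1 - \<rho> t k)\<bar>)"
          using kpos by (intro mult_left_mono sum_abs) auto
        also have "\<dots> \<le> \<kappa> * (real (card {1..n}) * ((2*R*L + \<theta>t R) * \<bar>d t\<bar>))"
        proof (intro mult_left_mono sum_bounded_above)
          fix k assume k: "k \<in> {1..n}"
          show "\<bar>\<theta>t (min (\<rho> t i) (\<rho> t k)) * (\<rho> t i - \<rho> t k)
                  - \<theta>t (min (\<rho> t 1) (\<rho> t k)) * (\<rho> t 1 - \<rho> t k)\<bar> \<le> (2*R*L + \<theta>t R) * \<bar>d t\<bar>"
            unfolding d_def
            by (rule g_lip[OF L nonneg mono]) (use Rb t k in1 in auto)
        qed (use kpos in auto)
        also have "\<dots> = KK * \<bar>d t\<bar>" by (simp add: KK_def)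
        finally show ?thesis .
      qed
      have "\<rho> 0 i = \<rho> 0 1" using init_eq i by blast
      thus "d 0 = 0" by (simp add: d_def)
    qed (use t0 in auto)
    thus ?thesis by (simp add: d_def)
  qed
  define M0 where "M0 = Max ((\<lambda>j. \<rho> 0 j) ` {m<..n})"
  define g0 where "g0 = \<rho> 0 1 - M0"
  have ord: "\<forall>j. m < j \<and> j \<le> n \<longrightarrow> \<rho> 0 j \<le> \<rho> 0 (m+1)"
  proof
    fix j show "m < j \<and> j \<le> n \<longrightarrow> \<rho> 0 j \<le> \<rho> 0 (m+1)"
    proof (induction j)
      case 0 then show ?case by simp
    next
      case (Suc j)
      show ?case
      proof (cases "Suc j = m+1")
        case True then show ?thesis by simp
      next
        case False
        show ?thesis using Suc init_ord[rule_format, of j] False by force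
      qed
    qed
  qed
  have fin: "finite {m<..n}" "{m<..n} \<noteq> {}" using m by auto
  have M0: "M0 < \<rho> 0 1" unfolding M0_def using fin ord init_gap
    by (subst Max_less_iff) force+
  have g0: "g0 > 0" using M0 by (simp add: g0_def)
  have le0: "\<rho> 0 j \<le> M0" if "j \<in> {m<..n}" for j
    unfolding M0_def using fin that by (intro Max_ge) auto
  have key: "\<rho> t0 1 - \<rho> t0 j > g0 - \<epsilon>*(1+t0)"
    if e: "0 < \<epsilon>" "\<epsilon>*(1+t0) < g0" and t0: "0 \<le> t0" and j: "j \<in> {m<..n}" for \<epsilon> t0 j
  proof (rule ccontr)
    assume neg: "\<not> ?thesis"
    define S where "S = {t\<in>{0..t0}. \<exists>j\<in>{m<..n}. \<rho> t 1 - \<rho> t j \<le> g0 - \<epsilon>*(1+t)}"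
    have "\<rho> t0 1 - \<rho> t0 j \<le> g0 - \<epsilon>*(1+t0)" using neg by simp
    hence "t0 \<in> S" using t0 j unfolding S_def by auto
    hence Sne: "S \<noteq> {}" by auto
    have Seq: "S = (\<Union>j\<in>{m<..n}. {t\<in>{0..t0}. \<rho> t 1 - \<rho> t j \<le> g0 - \<epsilon>*(1+t)})"
      by (auto simp: S_def)
    have "closed S" unfolding Seq
    proof (intro closed_UN ballI)
      fix j assume "j \<in> {m<..n}"
      hence "j \<in> {1..n}" using m by auto
      moreover have "(1::nat) \<in> {1..n}" using m by auto
      ultimately have c1: "continuous_on {0..t0} (\<lambda>t. \<rho> t 1 - \<rho> t j)"
        by (intro continuous_on_diff cont)
      have c2: "continuous_on {0..t0} (\<lambda>t. g0 - \<epsilon>*(1+t))" by (intro continuous_intros)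
      show "closed {t\<in>{0..t0}. \<rho> t 1 - \<rho> t j \<le> g0 - \<epsilon>*(1+t)}"
        by (rule continuous_on_closed_Collect_le[OF c1 c2]) simp
    qed simp
    moreover have "bdd_below S" by (auto simp: S_def bdd_below_def)
    ultimately have TS: "Inf S \<in> S" using Sne closed_contains_Inf by blast
    define T where "T = Inf S"
    have T0: "0 \<le> T" "T \<le> t0" using TS by (auto simp: S_def T_def)
    have below: "\<rho> s 1 - \<rho> s k > g0 - \<epsilon>*(1+s)" if "0 \<le> s" "s < T" "k \<in> {m<..n}" for s k
    proof (rule ccontr)
      assume "\<not> ?thesis"
      hence "\<rho> s 1 - \<rho> s k \<le> g0 - \<epsilon>*(1+s)" by simp
      hence "s \<in> S" using that T0 unfolding S_def by auto
      hence "T \<le> s" unfolding T_def using \<open>bdd_below S\<close> by (rule cInf_lower)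
      thus False using that by simp
    qed
    have "0 \<notin> S"
    proof
      assume "0 \<in> S"
      then obtain k where k: "k \<in> {m<..n}" "\<rho> 0 1 - \<rho> 0 k \<le> g0 - \<epsilon>" by (auto simp: S_def)
      thus False using le0[OF k(1)] e by (simp add: g0_def)
    qed
    hence Tpos: "T > 0" using TS T0 unfolding T_def by (metis order_le_less)
    have "Max ((\<lambda>j. \<rho> T j) ` {m<..n}) \<in> (\<lambda>j. \<rho> T j) ` {m<..n}"
      using fin by (intro Max_in) auto
    then obtain j0 where j0: "j0 \<in> {m<..n}" "\<rho> T j0 = Max ((\<lambda>j. \<rho> T j) ` {m<..n})"
      by (metis imageE)
    have j0max: "\<rho> T k \<le> \<rho> T j0" if "k \<in> {m<..n}" for k
      unfolding j0(2) using fin that by (intro Max_ge) auto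
    define \<phi> where "\<phi> s = \<rho> s 1 - \<rho> s j0 - g0 + \<epsilon>*(1+s)" for s
    have "\<phi> T \<le> 0"
    proof -
      obtain k where k: "k \<in> {m<..n}" "\<rho> T 1 - \<rho> T k \<le> g0 - \<epsilon>*(1+T)"
        using TS by (auto simp: S_def T_def)
      thus ?thesis using j0max[OF k(1)] by (simp add: \<phi>_def)
    qed
    have j0n: "j0 \<in> {1..n}" using j0 m by auto
    have one: "(1::nat) \<in> {1..n}" using m by auto
    define D1 where "D1 = \<kappa> * (\<Sum>k=1..n. \<theta>t (min (\<rho> T 1) (\<rho> T k)) * (\<rho> T 1 - \<rho> T k))"
    define Dj where "Dj = \<kappa> * (\<Sum>k=1..n. \<theta>t (min (\<rho> T j0) (\<rho> T k)) * (\<rho> T j0 - \<rho> T k))"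
    have dphi: "(\<phi> has_real_derivative (D1 - Dj + \<epsilon>)) (at T within {0..})"
    proof -
      have h1: "((\<lambda>s. \<rho> s 1) has_real_derivative D1) (at T within {0..})"
        unfolding D1_def using ode one T0 by blast
      have hj: "((\<lambda>s. \<rho> s j0) has_real_derivative Dj) (at T within {0..})"
        using ode j0n T0 unfolding Dj_def by blast
      have h3: "((\<lambda>s. \<epsilon>*(1+s)) has_real_derivative \<epsilon>) (at T within {0..})"
        by (auto intro!: derivative_eq_intros)
      have "(\<phi> has_real_derivative (D1 - Dj - 0 + \<epsilon>)) (at T within {0..})"
        unfolding \<phi>_def by (rule DERIV_add[OF DERIV_diff[OF DERIV_diff[OF h1 hj] DERIV_const] h3])
      thus ?thesis by simp
    qed
    have phiT0: "\<phi> T \<ge> 0"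
    proof (rule ccontr)
      assume "\<not> \<phi> T \<ge> 0"
      hence neg: "\<phi> T < 0" by simp
      have "continuous (at T within {0..}) \<phi>" using dphi by (rule DERIV_continuous)
      hence "(\<phi> \<longlongrightarrow> \<phi> T) (at T within {0..})" by (simp add: continuous_within)
      hence "\<forall>\<^sub>F s in at T within {0..}. \<phi> s < 0" using neg by (rule order_tendstoD)
      then obtain \<delta> where \<delta>: "\<delta> > 0" "\<And>s. s \<in> {0..} \<Longrightarrow> s \<noteq> T \<Longrightarrow> dist s T < \<delta> \<Longrightarrow> \<phi> s < 0"
        unfolding eventually_at by auto
      define s where "s = T - min (\<delta>/2) T"
      have s: "0 \<le> s" "s < T" "dist s T < \<delta>" using \<delta> Tpos by (auto simp: s_def dist_real_def)
      have "\<phi> s < 0" using \<delta>(2)[of s] s by auto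
      moreover have "\<phi> s > 0" using below[OF s(1) s(2) j0(1)] by (simp add: \<phi>_def)
      ultimately show False by simp
    qed
    have gapT: "\<rho> T j0 \<le> \<rho> T 1"
    proof -
      have ee: "\<epsilon>*(1+T) \<le> \<epsilon>*(1+t0)" using e T0 by (intro mult_left_mono) auto
      have "0 \<le> \<rho> T 1 - \<rho> T j0 - g0 + \<epsilon>*(1+T)" using phiT0 by (simp add: \<phi>_def)
      thus ?thesis using ee e by linarith
    qed
    have "Dj \<le> D1" unfolding Dj_def D1_def
    proof (intro mult_left_mono sum_mono)
      fix k assume k: "k \<in> {1..n}"
      show "\<theta>t (min (\<rho> T j0) (\<rho> T k)) * (\<rho> T j0 - \<rho> T k) \<le> \<theta>t (min (\<rho> T 1) (\<rho> T k)) * (\<rho> T 1 - \<rho> T k)"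
      proof (rule term_ineq[OF nonneg gapT])
        show "\<rho> T k = \<rho> T 1 \<or> \<rho> T k \<le> \<rho> T j0"
        proof (cases "k \<le> m")
          case True thus ?thesis using eqpart[of T k] k T0 by auto
        next
          case False thus ?thesis using j0max[of k] k by auto
        qed
      qed
    qed (use kpos in auto)
    hence "D1 - Dj + \<epsilon> > 0" using e by simp
    from has_real_derivative_pos_inc_left[OF dphi this]
    obtain d where d: "d > 0" "\<And>h. h > 0 \<Longrightarrow> T - h \<in> {0..} \<Longrightarrow> h < d \<Longrightarrow> \<phi> (T - h) < \<phi> T" by blast
    define h where "h = min (d/2) T"
    have h: "h > 0" "T - h \<in> {0..}" "h < d" using d Tpos by (auto simp: h_def)
    have "\<phi> (T - h) < 0" using d(2)[OF h] \<open>\<phi> T \<le> 0\<close> by simp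
    moreover have "\<phi> (T - h) > 0" using below[of "T - h" j0] h j0(1) by (simp add: \<phi>_def)
    ultimately show False by simp
  qed
  show ?thesis
  proof (intro allI impI conjI ballI)
    fix t0 :: real and i assume t0: "0 \<le> t0"
    show "i \<in> {1..m} \<Longrightarrow> \<rho> t0 i = \<rho> t0 1" using eqpart t0 by blast
    have "Max ((\<lambda>j. \<rho> t0 j) ` {m<..n}) \<le> \<rho> t0 1 - g0"
    proof (subst Max_le_iff)
      show "\<forall>a\<in>(\<lambda>j. \<rho> t0 j) ` {m<..n}. a \<le> \<rho> t0 1 - g0"
      proof (rule ccontr)
        assume "\<not> ?thesis"
        then obtain j where j: "j \<in> {m<..n}" "\<rho> t0 j > \<rho> t0 1 - g0" by auto
        define \<delta> where "\<delta> = g0 - (\<rho> t0 1 - \<rho> t0 j)"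
        have \<delta>: "\<delta> > 0" using j by (simp add: \<delta>_def)
        define \<epsilon> where "\<epsilon> = min (\<delta>/2) (g0/2) / (1+t0)"
        have e1: "\<epsilon>*(1+t0) = min (\<delta>/2) (g0/2)" using t0 by (simp add: \<epsilon>_def)
        have "0 < \<epsilon>" using \<delta> g0 t0 by (simp add: \<epsilon>_def)
        moreover have "\<epsilon>*(1+t0) < g0" using e1 g0 by simp
        ultimately have "\<rho> t0 1 - \<rho> t0 j > g0 - \<epsilon>*(1+t0)" using key t0 j(1) by blast
        moreover have "\<rho> t0 1 - \<rho> t0 j = g0 - \<delta>" by (simp add: \<delta>_def)
        moreover have "min (\<delta>/2) (g0/2) \<le> \<delta>/2" by simp
        ultimately show False using e1 \<delta> by linarith
      qed
    qed (use fin in auto)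
    thus "\<rho> 0 1 - Max ((\<lambda>j. \<rho> 0 j) ` {m<..n}) \<le> \<rho> t0 1 - Max ((\<lambda>j. \<rho> t0 j) ` {m<..n})"
      by (simp add: g0_def M0_def)
  qed
qed

end
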